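(* Let $Y$ be a mean zero random variable with variance $\sigma^2 \in (0,\infty)$ and moment generating function $m(s)=\mathbb{E}[e^{sY}]$, and let $Y^*$ have the $Y$-zero biased distribution and be defined on the same probability space as $Y$. (a) If $Y^*-Y \le c$ almost surely for some constant $c>0$ and $m(s)$ is finite for all $s\in[0,1/c)$, then for all $t\ge 0$, $$\mathbb{P}(Y\ge t)\le \exp\left(-\frac{t^2}{2(\sigma^2+ct)}\right).$$ The same upper bound holds for $\mathbb{P}(Y\le -t)$, $t \ge 0$, if $Y-Y^*\le c$ almost surely and $m(s)$ is finite for all $s\in(-1/c,0]$. If $|Y^*-Y|\le c$ almost surely for some $c>0$ and $m(s)$ is finite for all $s\in[0,2/c)$, then for all $t\ge0$, $$\mathbb{P}(Y\ge t)\le \exp\left(-\frac{t^2}{10\sigma^2/3+ct}\right),$$ and the same upper bound holds for $\mathbb{P}(Y\le -t)$ if $|Y^*-Y|\le c$ almost surely and $m(s)$ is finite for all $s\in(-2/c,0]$. (b) Let $t>e$ and $\theta=(\log t-\log\log t)/c$. If $Y^*-Y\le c$ almost surely for some constant $c>0$ and $m(\theta)$ is finite, then $$\mathbb{P}(Y\ge t)\le \exp\left(-\frac{t}{c}\left(\log t-\log\log t-\frac{\sigma^2}{c}\right)\right)\le \exp\left(-\frac{t}{2c}\left(\log t-\frac{2\sigma^2}{c}\right)\right).$$ If $Y-Y^*\le c$ almost surely and $m(-\theta)$ is finite, the same bound holds for $\mathbb{P}(Y\le -t)$.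
   Context: Zero bias distribution: for a mean zero random variable $Y$ with finite positive variance $\sigma^2$, a random variable $Y^*$ is said to have the $Y$-zero biased distribution if $\mathbb{E}[Yf(Y)]=\sigma^2\mathbb{E}[f'(Y^* )]$ for all absolutely continuous functions $f$ for which the expectation of either side exists. Such a distribution always exists. "Defined on the same space" means $(Y,Y^* )$ is a coupling, i.e. a pair of random variables on a common probability space with the given marginal laws. *)

theory Defs
  imports "HOL-Probability.Probability"
begin

text \<open>f is absolutely continuous (on every compact interval) with a.e. derivative g:
  f(b) - f(a) is the Lebesgue integral of the locally integrable g over [a,b].\<close>
definition abs_cont_deriv :: "(real \<Rightarrow> real) \<Rightarrow> (real \<Rightarrow> real) \<Rightarrow> bool" where
  "abs_cont_deriv f g \<longleftrightarrow>
     (\<forall>a b. a \<le> b \<longrightarrow> set_integrable lborel {a..b} g \<and>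
        f b - f a = (\<integral>x\<in>{a..b}. g x \<partial>lborel))"

text \<open>Ys has the Y-zero biased distribution (Y mean zero, variance = E[Y^2]):
  E[Y f(Y)] = sigma^2 E[f'(Ys)] for all absolutely continuous f for which the expectations exist.\<close>
definition zero_biased :: "'a measure \<Rightarrow> ('a \<Rightarrow> real) \<Rightarrow> ('a \<Rightarrow> real) \<Rightarrow> bool" where
  "zero_biased M Y Ys \<longleftrightarrow>
     (\<forall>f g. abs_cont_deriv f g \<longrightarrow>
        integrable M (\<lambda>\<omega>. Y \<omega> * f (Y \<omega>)) \<longrightarrow>
        integrable M (\<lambda>\<omega>. g (Ys \<omega>)) \<longrightarrow>
        (\<integral>\<omega>. Y \<omega> * f (Y \<omega>) \<partial>M) = (\<integral>\<omega>. (Y \<omega>)\<^sup>2 \<partial>M) * (\<integral>\<omega>. g (Ys \<omega>) \<partial>M))"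

end

theory Submission
  imports Defs
begin


lemma abs_cont_exp: "abs_cont_deriv (\<lambda>y. exp (r*y)) (\<lambda>y. r * exp (r*y))"
  unfolding abs_cont_deriv_def
proof (intro allI impI conjI)
  fix a b :: real assume ab: "a \<le> b"
  show "set_integrable lborel {a..b} (\<lambda>y. r * exp (r*y))"
    unfolding set_integrable_def
    by (rule borel_integrable_compact) (auto intro!: continuous_intros)
  have "(\<integral>x. r * exp (r*x) * indicator {a .. b} x \<partial>lborel) = exp (r*b) - exp (r*a)"
    by (rule integral_FTC_Icc_real[OF ab]) (auto intro!: derivative_eq_intros continuous_intros)
  then show "exp (r*b) - exp (r*a) = (\<integral>x\<in>{a..b}. r * exp (r*x) \<partial>lborel)"
    unfolding set_lebesgue_integral_def by (simp add: mult.commute)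
qed

lemma exp_tanh:
  fixes d :: real assumes "0 \<le> d"
  shows "exp d - 1 \<le> d * (exp d + 1) / 2"
proof -
  define h where "h x = x * (exp x + 1) / 2 - exp x + 1" for x :: real
  have "h 0 \<le> h d"
  proof (rule DERIV_nonneg_imp_nondecreasing[OF assms])
    fix x :: real assume x: "0 \<le> x" "x \<le> d"
    have d: "DERIV h x :> ((exp x + 1) / 2 + x * exp x / 2 - exp x)"
      unfolding h_def by (auto intro!: derivative_eq_intros simp: field_simps)
    have "1 - x \<le> exp (-x)" using exp_ge_add_one_self[of "-x"] by simp
    hence "exp x * (1 - x) \<le> exp x * exp (-x)" by (intro mult_left_mono) auto
    hence "exp x * (1 - x) \<le> 1" by (simp add: exp_minus)
    hence "(exp x + 1) / 2 + x * exp x / 2 - exp x \<ge> 0" by (simp add: field_simps)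
    with d show "\<exists>y. DERIV h x :> y \<and> y \<ge> 0" by blast
  qed
  thus ?thesis by (simp add: h_def)
qed



lemma gron:
  fixes m b G :: "real \<Rightarrow> real" and \<theta> :: real
  assumes th: "0 < \<theta>"
    and bmono: "\<And>x y. 0 \<le> x \<Longrightarrow> x \<le> y \<Longrightarrow> b x \<le> b y"
    and b0: "0 \<le> b 0"
    and Gd: "\<And>x. 0 \<le> x \<Longrightarrow> (G has_real_derivative b x) (at x)"
    and G0: "G 0 = 0" and m0: "m 0 = 1"
    and step: "\<And>u u'. 0 \<le> u' \<Longrightarrow> u' \<le> u \<Longrightarrow> u \<le> \<theta> \<Longrightarrow> m u * (1 - (u - u') * b u) \<le> m u'"
  shows "m \<theta> \<le> exp (G \<theta>)"
proof -
  have mvt: "(y - x) * b x \<le> G y - G x \<and> G y - G x \<le> (y - x) * b y" if xy: "0 \<le> x" "x \<le> y" for x y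
  proof (cases "x = y")
    case True then show ?thesis by simp
  next
    case False
    hence "x < y" using xy by simp
    from MVT2[OF this, of G b] Gd xy obtain z where z: "x < z" "z < y" "G y - G x = (y - x) * b z"
      by force
    have "b x \<le> b z" "b z \<le> b y" using bmono z xy by auto
    with z \<open>x < y\<close> show ?thesis by (auto intro: mult_left_mono)
  qed
  have bnn: "0 \<le> b x" if "0 \<le> x" for x using bmono[of 0 x] b0 that by simp
  define D where "D = b (\<theta>+1) + 2*\<theta>*(b \<theta>)^2"
  have key: "m \<theta> \<le> exp (G \<theta> + \<theta>/n * D)"
    if n1: "n \<ge> 1" and nb1: "\<theta>/n \<le> 1" and nb2: "\<theta>/n * b \<theta> \<le> 1/2" for n :: nat
  proof -
    define \<Delta> where "\<Delta> = \<theta> / n"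
    have Dp: "\<Delta> > 0" using th n1 by (simp add: \<Delta>_def)
    have nD: "real n * \<Delta> = \<theta>" using n1 by (simp add: \<Delta>_def)
    have ind: "m (real j*\<Delta>) \<le> exp (G (real j*\<Delta> + \<Delta>) + 2 * real j * (\<Delta> * b \<theta>)^2)" if "j \<le> n" for j
      using that
    proof (induction j)
      case 0
      have "0 \<le> G \<Delta>" using mvt[of 0 \<Delta>] Dp G0 bnn[of 0] by (smt (verit) mult_nonneg_nonneg)
      then show ?case using m0 by simp
    next
      case (Suc j)
      define u where "u = real (Suc j) * \<Delta>"
      define x where "x = \<Delta> * b u"
      have u0: "0 \<le> u" using Dp by (simp add: u_def)
      have uth: "u \<le> \<theta>" unfolding u_def using Suc.prems Dp nD[symmetric]
        by (simp add: mult_right_mono)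
      have bu: "0 \<le> b u" "b u \<le> b \<theta>" using bnn[OF u0] bmono[OF u0 uth] by auto
      have x0: "0 \<le> x" using bu Dp by (simp add: x_def)
      have xb: "x \<le> \<Delta> * b \<theta>" using bu Dp by (simp add: x_def mult_left_mono)
      have x2: "x \<le> 1/2" using xb nb2 unfolding \<Delta>_def by linarith
      have st: "m u * (1 - x) \<le> m (real j * \<Delta>)"
        using step[of "real j * \<Delta>" u] u0 uth Dp unfolding x_def u_def
        by (auto simp: algebra_simps)
      have lnb: "- x - 2 * x\<^sup>2 \<le> ln (1 - x)" using ln_one_minus_pos_lower_bound[OF x0 x2] .
      have ex: "exp (- x - 2 * x\<^sup>2) \<le> 1 - x"
        using exp_le_cancel_iff[THEN iffD2, OF lnb] x2 by simp
      have inv: "1 / (1 - x) \<le> exp (x + 2 * x\<^sup>2)"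
      proof -
        have "1 \<le> (1 - x) * exp (x + 2 * x\<^sup>2)"
          using mult_right_mono[OF ex, of "exp (x + 2 * x\<^sup>2)"]
          by (simp add: exp_add[symmetric])
        thus ?thesis using x2 by (simp add: divide_simps mult.commute)
      qed
      have IH: "m (real j*\<Delta>) \<le> exp (G (real j*\<Delta> + \<Delta>) + 2 * real j * (\<Delta> * b \<theta>)^2)"
        using Suc by simp
      have ju: "real j*\<Delta> + \<Delta> = u" by (simp add: u_def algebra_simps)
      have "m u \<le> m (real j * \<Delta>) / (1 - x)" using st x2 by (simp add: pos_le_divide_eq)
      also have "\<dots> \<le> exp (G u + 2 * real j * (\<Delta> * b \<theta>)^2) * (1 / (1 - x))"
        using IH x2 ju by (simp add: divide_right_mono)
      also have "\<dots> \<le> exp (G u + 2 * real j * (\<Delta> * b \<theta>)^2) * exp (x + 2 * x\<^sup>2)"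
        by (rule mult_left_mono[OF inv]) simp
      also have "\<dots> = exp (G u + x + 2 * real j * (\<Delta> * b \<theta>)^2 + 2 * x\<^sup>2)"
        by (simp add: exp_add[symmetric] algebra_simps)
      also have "\<dots> \<le> exp (G (u + \<Delta>) + 2 * real (Suc j) * (\<Delta> * b \<theta>)^2)"
      proof -
        have "G u + x \<le> G (u + \<Delta>)" using mvt[of u "u + \<Delta>"] u0 Dp by (simp add: x_def mult.commute)
        moreover have "x\<^sup>2 \<le> (\<Delta> * b \<theta>)^2" using x0 xb by (simp add: power_mono)
        ultimately show ?thesis by (simp add: algebra_simps)
      qed
      finally show ?case by (simp add: u_def)
    qed
    have "m \<theta> \<le> exp (G (\<theta> + \<Delta>) + 2 * real n * (\<Delta> * b \<theta>)^2)"
      using ind[of n] nD by simp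
    also have "\<dots> \<le> exp (G \<theta> + \<theta>/n * D)"
    proof -
      have "G (\<theta> + \<Delta>) \<le> G \<theta> + \<Delta> * b (\<theta> + \<Delta>)" using mvt[of \<theta> "\<theta>+\<Delta>"] th Dp by simp
      also have "\<dots> \<le> G \<theta> + \<Delta> * b (\<theta> + 1)"
      proof -
        have "\<theta>+\<Delta> \<le> \<theta>+1" using nb1 by (simp add: \<Delta>_def)
        hence "b (\<theta>+\<Delta>) \<le> b (\<theta>+1)" using bmono[of "\<theta>+\<Delta>" "\<theta>+1"] th Dp by simp
        thus ?thesis using Dp by (simp add: mult_left_mono)
      qed
      finally have "G (\<theta> + \<Delta>) \<le> G \<theta> + \<Delta> * b (\<theta> + 1)" .
      moreover have "2 * real n * (\<Delta> * b \<theta>)^2 = \<Delta> * (2 * \<theta> * (b \<theta>)^2)"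
        using nD by (simp add: power2_eq_square algebra_simps)
      ultimately show ?thesis by (simp add: D_def \<Delta>_def algebra_simps)
    qed
    finally show ?thesis .
  qed
  show ?thesis
  proof (rule ccontr)
    assume "\<not> ?thesis"
    hence gt: "exp (G \<theta>) < m \<theta>" by simp
    hence mp: "0 < m \<theta>" using exp_gt_zero less_trans by blast
    define \<epsilon> where "\<epsilon> = ln (m \<theta>) - G \<theta>"
    have ep: "0 < \<epsilon>" using gt mp ln_less_cancel_iff[of "exp (G \<theta>)" "m \<theta>"] unfolding \<epsilon>_def by simp
    have Dn: "0 \<le> D" unfolding D_def using bnn[of "\<theta>+1"] th by simp
    obtain n :: nat where n: "max (\<theta> + 2*\<theta>*b \<theta> + 1) (\<theta>*D/\<epsilon>) < n"
      using reals_Archimedean2 by blast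
    have "0 \<le> \<theta> + 2*\<theta>*b \<theta>" using th bnn[of \<theta>] by simp
    hence "1 < real n" using n by linarith
    hence n1: "n \<ge> 1" by simp
    have np: "0 < real n" using n1 by simp
    have tb: "0 \<le> \<theta> * b \<theta>" using th bnn[of \<theta>] by simp
    have nth: "\<theta> \<le> real n" "2 * (\<theta> * b \<theta>) \<le> real n" using n tb th by auto
    have "\<theta>/n \<le> 1" using nth np by (simp add: divide_le_eq)
    moreover have "\<theta>/n * b \<theta> \<le> 1/2"
    proof -
      have "\<theta>/n * b \<theta> = (\<theta> * b \<theta>) / n" by simp
      also have "\<dots> \<le> 1/2" using nth np by (simp add: divide_le_eq)
      finally show ?thesis .
    qed
    ultimately have "m \<theta> \<le> exp (G \<theta> + \<theta>/n * D)" using key n1 by blast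
    moreover have "\<theta>/n * D < \<epsilon>"
    proof -
      have "\<theta>*D/\<epsilon> < n" using n by simp
      hence "\<theta>*D < n * \<epsilon>" using ep by (simp add: pos_divide_less_eq)
      hence "(\<theta>*D) / n < \<epsilon>" using np by (simp add: pos_divide_less_eq mult.commute)
      thus ?thesis by simp
    qed
    hence "exp (G \<theta> + \<theta>/n * D) < exp (G \<theta> + \<epsilon>)" by simp
    moreover have "exp (G \<theta> + \<epsilon>) = m \<theta>" using mp by (simp add: \<epsilon>_def)
    ultimately show False by simp
  qed
qed



context prob_space begin

lemma exp_int_mono:
  fixes Z :: "'a \<Rightarrow> real" and u \<theta>1 :: real
  assumes i: "integrable M (\<lambda>\<omega>. exp (\<theta>1 * Z \<omega>))" and Zm: "Z \<in> borel_measurable M"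
    and u: "0 \<le> u" "u \<le> \<theta>1"
  shows "integrable M (\<lambda>\<omega>. exp (u * Z \<omega>))"
proof (rule Bochner_Integration.integrable_bound[where f = "\<lambda>\<omega>. 1 + exp (\<theta>1 * Z \<omega>)"])
  show "integrable M (\<lambda>\<omega>. 1 + exp (\<theta>1 * Z \<omega>))" using i by auto
  show "(\<lambda>\<omega>. exp (u * Z \<omega>)) \<in> borel_measurable M" using Zm by measurable
  show "AE \<omega> in M. norm (exp (u * Z \<omega>)) \<le> norm (1 + exp (\<theta>1 * Z \<omega>))"
  proof (intro AE_I2)
    fix \<omega>
    have "exp (u * Z \<omega>) \<le> 1 + exp (\<theta>1 * Z \<omega>)"
    proof (cases "Z \<omega> \<ge> 0")
      case True
      hence "u * Z \<omega> \<le> \<theta>1 * Z \<omega>" using u by (simp add: mult_right_mono)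
      hence "exp (u * Z \<omega>) \<le> exp (\<theta>1 * Z \<omega>)" by simp
      thus ?thesis by (smt (verit) exp_gt_zero)
    next
      case False
      hence "u * Z \<omega> \<le> 0" using u by (simp add: mult_nonneg_nonpos)
      hence "exp (u * Z \<omega>) \<le> 1" by simp
      thus ?thesis by (smt (verit) exp_gt_zero)
    qed
    thus "norm (exp (u * Z \<omega>)) \<le> norm (1 + exp (\<theta>1 * Z \<omega>))"
      by (smt (verit) exp_gt_zero real_norm_def)
  qed
qed

lemma zexp_int:
  fixes Z :: "'a \<Rightarrow> real" and u \<theta>1 :: real
  assumes i: "integrable M (\<lambda>\<omega>. exp (\<theta>1 * Z \<omega>))" and Zi: "integrable M Z"
    and u: "0 \<le> u" "u < \<theta>1"
  shows "integrable M (\<lambda>\<omega>. Z \<omega> * exp (u * Z \<omega>))"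
proof (rule Bochner_Integration.integrable_bound[where f = "\<lambda>\<omega>. \<bar>Z \<omega>\<bar> + exp (\<theta>1 * Z \<omega>) / (\<theta>1 - u)"])
  show "integrable M (\<lambda>\<omega>. \<bar>Z \<omega>\<bar> + exp (\<theta>1 * Z \<omega>) / (\<theta>1 - u))" using i Zi by auto
  have Zm: "Z \<in> borel_measurable M" using Zi by auto
  show "(\<lambda>\<omega>. Z \<omega> * exp (u * Z \<omega>)) \<in> borel_measurable M" using Zm by measurable
  show "AE \<omega> in M. norm (Z \<omega> * exp (u * Z \<omega>)) \<le> norm (\<bar>Z \<omega>\<bar> + exp (\<theta>1 * Z \<omega>) / (\<theta>1 - u))"
  proof (intro AE_I2)
    fix \<omega>
    define z where "z = Z \<omega>"
    have d: "0 < \<theta>1 - u" using u by simp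
    have "\<bar>z * exp (u * z)\<bar> \<le> \<bar>z\<bar> + exp (\<theta>1 * z) / (\<theta>1 - u)"
    proof (cases "z \<ge> 0")
      case True
      have "(\<theta>1 - u) * z \<le> exp ((\<theta>1 - u) * z)" using exp_ge_add_one_self[of "(\<theta>1 - u) * z"] by linarith
      hence "(\<theta>1 - u) * z * exp (u * z) \<le> exp ((\<theta>1 - u) * z) * exp (u * z)" by (simp add: mult_right_mono)
      also have "\<dots> = exp (\<theta>1 * z)" by (simp add: exp_add[symmetric] algebra_simps)
      finally have "z * exp (u * z) \<le> exp (\<theta>1 * z) / (\<theta>1 - u)" using d
        by (simp add: pos_le_divide_eq mult.commute mult.left_commute)
      thus ?thesis using True by (simp add: abs_mult)
    next
      case False
      hence "u * z \<le> 0" using u by (simp add: mult_nonneg_nonpos)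
      hence "exp (u * z) \<le> 1" by simp
      hence "\<bar>z * exp (u * z)\<bar> \<le> \<bar>z\<bar>" by (simp add: abs_mult mult_left_le)
      moreover have "0 \<le> exp (\<theta>1 * z) / (\<theta>1 - u)" using d by simp
      ultimately show ?thesis by linarith
    qed
    thus "norm (Z \<omega> * exp (u * Z \<omega>)) \<le> norm (\<bar>Z \<omega>\<bar> + exp (\<theta>1 * Z \<omega>) / (\<theta>1 - u))"
      using d by (simp add: z_def)
  qed
qed

lemma chernoff:
  fixes Z :: "'a \<Rightarrow> real" and t \<theta> :: real
  assumes th: "0 \<le> \<theta>" and i: "integrable M (\<lambda>\<omega>. exp (\<theta> * Z \<omega>))" and Zm: "Z \<in> borel_measurable M"
  shows "measure M {\<omega>\<in>space M. t \<le> Z \<omega>} \<le> exp (- \<theta> * t) * (\<integral>\<omega>. exp (\<theta> * Z \<omega>) \<partial>M)"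
proof -
  let ?A = "{\<omega>\<in>space M. t \<le> Z \<omega>}"
  have A: "?A \<in> sets M" using Zm by measurable
  have "measure M ?A = (\<integral>\<omega>. indicator ?A \<omega> \<partial>M)" by (simp add: Int_absorb2)
  also have "\<dots> \<le> (\<integral>\<omega>. exp (- \<theta> * t) * exp (\<theta> * Z \<omega>) \<partial>M)"
  proof (rule integral_mono)
    show "integrable M (indicator ?A :: 'a \<Rightarrow> real)" using A by (simp add: emeasure_eq_measure)
    show "integrable M (\<lambda>\<omega>. exp (- \<theta> * t) * exp (\<theta> * Z \<omega>))" using i by simp
    fix \<omega> assume "\<omega> \<in> space M"
    show "indicator ?A \<omega> \<le> exp (- \<theta> * t) * exp (\<theta> * Z \<omega>)"
    proof (cases "\<omega> \<in> ?A")
      case True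
      hence "0 \<le> \<theta> * (Z \<omega> - t)" using th by simp
      hence "1 \<le> exp (\<theta> * (Z \<omega> - t))" by simp
      also have "\<dots> = exp (- \<theta> * t) * exp (\<theta> * Z \<omega>)" by (simp add: exp_add[symmetric] algebra_simps)
      finally show ?thesis using True by simp
    qed simp
  qed
  also have "\<dots> = exp (- \<theta> * t) * (\<integral>\<omega>. exp (\<theta> * Z \<omega>) \<partial>M)" by simp
  finally show ?thesis .
qed

end


context prob_space begin

lemma core:
  fixes Z Zs :: "'a \<Rightarrow> real" and \<sigma>2 \<theta> \<theta>1 :: real and b G :: "real \<Rightarrow> real"
  assumes Zi: "integrable M Z" and Zsm: "Zs \<in> borel_measurable M" and sig: "0 < \<sigma>2"
    and zb: "\<And>u. 0 \<le> u \<Longrightarrow> integrable M (\<lambda>\<omega>. Z \<omega> * exp (u * Z \<omega>)) \<Longrightarrow>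
              integrable M (\<lambda>\<omega>. exp (u * Zs \<omega>)) \<Longrightarrow>
              (\<integral>\<omega>. Z \<omega> * exp (u * Z \<omega>) \<partial>M) = \<sigma>2 * u * (\<integral>\<omega>. exp (u * Zs \<omega>) \<partial>M)"
    and i1: "integrable M (\<lambda>\<omega>. exp (\<theta>1 * Z \<omega>))" and th: "0 < \<theta>" "\<theta> < \<theta>1"
    and bmono: "\<And>x y. 0 \<le> x \<Longrightarrow> x \<le> y \<Longrightarrow> b x \<le> b y"
    and b0: "0 \<le> b 0"
    and Gd: "\<And>x. 0 \<le> x \<Longrightarrow> (G has_real_derivative b x) (at x)"
    and G0: "G 0 = 0"
    and AEb: "\<And>u. 0 \<le> u \<Longrightarrow> u \<le> \<theta> \<Longrightarrow> AE \<omega> in M. \<sigma>2 * u * exp (u * Zs \<omega>) \<le> b u * exp (u * Z \<omega>)"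
  shows "(\<integral>\<omega>. exp (\<theta> * Z \<omega>) \<partial>M) \<le> exp (G \<theta>)"
proof (rule gron[where m = "\<lambda>u. \<integral>\<omega>. exp (u * Z \<omega>) \<partial>M", OF th(1) bmono b0 Gd G0])
  have Zm: "Z \<in> borel_measurable M" using Zi by auto
  show "(\<integral>\<omega>. exp (0 * Z \<omega>) \<partial>M) = 1" by (simp add: prob_space)
  fix u u' :: real assume u: "0 \<le> u'" "u' \<le> u" "u \<le> \<theta>"
  let ?m = "\<lambda>u. \<integral>\<omega>. exp (u * Z \<omega>) \<partial>M"
  have iu: "integrable M (\<lambda>\<omega>. exp (u * Z \<omega>))" using exp_int_mono[OF i1 Zm] u th by simp
  have iu': "integrable M (\<lambda>\<omega>. exp (u' * Z \<omega>))" using exp_int_mono[OF i1 Zm] u th by simp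
  have izu: "integrable M (\<lambda>\<omega>. Z \<omega> * exp (u * Z \<omega>))" using zexp_int[OF i1 Zi] u th by simp
  have bu: "0 \<le> b u" using bmono[of 0 u] b0 u by simp
  have ius: "integrable M (\<lambda>\<omega>. exp (u * Zs \<omega>))"
  proof (cases "u = 0")
    case True then show ?thesis by simp
  next
    case False
    hence up: "0 < u" using u by simp
    show ?thesis
    proof (rule Bochner_Integration.integrable_bound[where f = "\<lambda>\<omega>. (b u / (\<sigma>2 * u)) * exp (u * Z \<omega>)"])
      show "integrable M (\<lambda>\<omega>. (b u / (\<sigma>2 * u)) * exp (u * Z \<omega>))" using iu by simp
      show "(\<lambda>\<omega>. exp (u * Zs \<omega>)) \<in> borel_measurable M" using Zsm by measurable
      show "AE \<omega> in M. norm (exp (u * Zs \<omega>)) \<le> norm (b u / (\<sigma>2 * u) * exp (u * Z \<omega>))"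
        using AEb[of u, OF u(1)[THEN order_trans[OF _ u(2)]] u(3)]
      proof (eventually_elim)
        case (elim \<omega>)
        have "exp (u * Zs \<omega>) \<le> b u / (\<sigma>2 * u) * exp (u * Z \<omega>)"
          using elim sig up by (simp add: field_simps)
        thus ?case using bu sig up by simp
      qed
    qed
  qed
  have "?m u - ?m u' = (\<integral>\<omega>. exp (u * Z \<omega>) - exp (u' * Z \<omega>) \<partial>M)" using iu iu' by simp
  also have "\<dots> \<le> (\<integral>\<omega>. (u - u') * (Z \<omega> * exp (u * Z \<omega>)) \<partial>M)"
  proof (rule integral_mono)
    show "integrable M (\<lambda>\<omega>. exp (u * Z \<omega>) - exp (u' * Z \<omega>))" using iu iu' by simp
    show "integrable M (\<lambda>\<omega>. (u - u') * (Z \<omega> * exp (u * Z \<omega>)))" using izu by simp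
    fix \<omega>
    have "1 + (u' - u) * Z \<omega> \<le> exp ((u' - u) * Z \<omega>)" by (rule exp_ge_add_one_self)
    hence "(1 + (u' - u) * Z \<omega>) * exp (u * Z \<omega>) \<le> exp ((u' - u) * Z \<omega>) * exp (u * Z \<omega>)"
      by (simp add: mult_right_mono)
    also have "\<dots> = exp (u' * Z \<omega>)" by (simp add: exp_add[symmetric] algebra_simps)
    finally show "exp (u * Z \<omega>) - exp (u' * Z \<omega>) \<le> (u - u') * (Z \<omega> * exp (u * Z \<omega>))"
      by (simp add: algebra_simps)
  qed
  also have "\<dots> = (u - u') * (\<sigma>2 * u * (\<integral>\<omega>. exp (u * Zs \<omega>) \<partial>M))"
    using zb[OF _ izu ius] u by simp
  also have "\<dots> \<le> (u - u') * (b u * ?m u)"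
  proof (rule mult_left_mono)
    have "\<sigma>2 * u * (\<integral>\<omega>. exp (u * Zs \<omega>) \<partial>M) = (\<integral>\<omega>. \<sigma>2 * u * exp (u * Zs \<omega>) \<partial>M)" by simp
    also have "\<dots> \<le> (\<integral>\<omega>. b u * exp (u * Z \<omega>) \<partial>M)"
      by (rule integral_mono_AE) (use ius iu AEb[of u, OF u(1)[THEN order_trans[OF _ u(2)]] u(3)] in auto)
    also have "\<dots> = b u * ?m u" by simp
    finally show "\<sigma>2 * u * (\<integral>\<omega>. exp (u * Zs \<omega>) \<partial>M) \<le> b u * ?m u" .
  qed (use u in simp)
  finally show "?m u * (1 - (u - u') * b u) \<le> ?m u'" by (simp add: algebra_simps)
qed

end


lemma pw_a:
  fixes u z zs c :: real assumes "0 \<le> u" "zs - z \<le> c"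
  shows "exp (u * zs) * (1 - u * c) \<le> exp (u * z)"
proof -
  have "1 + (u * z - u * zs) \<le> exp (u * z - u * zs)" by (rule exp_ge_add_one_self)
  hence "(1 + (u * z - u * zs)) * exp (u * zs) \<le> exp (u * z - u * zs) * exp (u * zs)"
    by (simp add: mult_right_mono)
  also have "\<dots> = exp (u * z)" by (simp add: exp_add[symmetric])
  finally have a: "exp (u * zs) + (u * z - u * zs) * exp (u * zs) \<le> exp (u * z)" by (simp add: algebra_simps)
  have "u * zs - u * z \<le> u * c" using assms by (simp add: right_diff_distrib[symmetric] mult_left_mono)
  hence "(u * zs - u * z) * exp (u * zs) \<le> u * c * exp (u * zs)" by (simp add: mult_right_mono)
  with a show ?thesis by (simp add: algebra_simps)
qed

lemma pw_c:
  fixes u z zs c :: real assumes u: "0 \<le> u" and d: "zs - z \<le> c" and uc: "u * c < 2" and cp: "0 < c"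
  shows "exp (u * zs) * (2 - u * c) \<le> exp (u * z) * (2 + u * c)"
proof (cases "z \<le> zs")
  case True
  define d where "d = u * zs - u * z"
  have d0: "0 \<le> d" using True u by (simp add: d_def right_diff_distrib[symmetric])
  have dc: "d \<le> u * c" using u d by (simp add: d_def right_diff_distrib[symmetric] mult_left_mono)
  have "exp d - 1 \<le> d * (exp d + 1) / 2" by (rule exp_tanh[OF d0])
  also have "\<dots> \<le> u * c * (exp d + 1) / 2"
    using dc by (simp add: divide_right_mono mult_right_mono add_pos_nonneg)
  finally have "(exp d - 1) * exp (u * z) \<le> (u * c * (exp d + 1) / 2) * exp (u * z)"
    by (simp add: mult_right_mono)
  moreover have "exp d * exp (u * z) = exp (u * zs)" by (simp add: d_def exp_add[symmetric])
  ultimately have "exp (u * zs) - exp (u * z) \<le> u * c * (exp (u * zs) + exp (u * z)) / 2"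
    by (simp add: algebra_simps)
  thus ?thesis by (simp add: algebra_simps)
next
  case False
  hence "u * zs \<le> u * z" using u by (simp add: mult_left_mono)
  hence e: "exp (u * zs) \<le> exp (u * z)" by simp
  have "0 \<le> u * c" using u cp by simp
  have "exp (u * zs) * (2 - u * c) \<le> exp (u * z) * (2 - u * c)" using e uc by (simp add: mult_right_mono)
  also have "\<dots> \<le> exp (u * z) * (2 + u * c)" using \<open>0 \<le> u * c\<close> by simp
  finally show ?thesis .
qed



lemma aux6: fixes D E :: real assumes "D \<noteq> 0" "E \<noteq> 0" shows "(-6*D^2)/(2*D^2*E) = - (3 / E)"
  using assms by (simp add: field_simps power2_eq_square)

lemma alg_c: fixes q c t :: real assumes q: "0 < q" and c: "0 < c" and t: "0 \<le> t"
  shows "- (t / (q + c*t)) * t + q * ((2 + t / (q + c*t) * c) / (2 - t / (q + c*t) * c)) * (t / (q + c*t))\<^sup>2 / 2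
         \<le> - (t\<^sup>2 / (10 * q / 3 + c * t))"
proof -
  define x where "x = c * t"
  have x: "0 \<le> x" using c t by (simp add: x_def)
  define D where "D = q + x"
  have D: "0 < D" using q x by (simp add: D_def)
  have tx: "t / D * c = x / D" by (simp add: x_def)
  have dx: "0 < 2 * D - x" using q x by (simp add: D_def)
  have "(2 + x / D) / (2 - x / D) = (2*D + x) / (2*D - x)"
    using D dx by (simp add: field_simps)
  also have "\<dots> = (2*q + 3*x) / (2*q + x)" by (simp add: D_def algebra_simps)
  finally have R: "(2 + t / D * c) / (2 - t / D * c) = (2*q + 3*x) / (2*q + x)" using tx by metis
  have E: "10 * q / 3 + c * t = (10*q + 3*x)/3" by (simp add: x_def)
  have main: "- (1 / D) + q * ((2*q + 3*x) / (2*q + x)) * (1/D)\<^sup>2 / 2 \<le> - (3 / (10 * q + 3 * x))"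
  proof -
    define R where "R = (2*q + 3*x) / (2*q + x)"
    have p1: "0 < 2*q+x" "0 < 10*q+3*x" using q x by auto
    have hR: "R * (2*q+x) = 2*q+3*x" using p1 by (simp add: R_def)
    have a: "- (1 / D) + q * R * (1/D)\<^sup>2 / 2 = (q*R - 2*D)/(2*D^2)"
      using D by (simp add: field_simps power2_eq_square)
    have poly: "-2*D*(2*q+x)*(10*q+3*x) + q*(2*q+3*x)*(10*q+3*x) \<le> -6*D^2*(2*q+x)"
      unfolding D_def using q x
      by (simp add: algebra_simps power2_eq_square power3_eq_cube)
         (smt (verit) mult_nonneg_nonneg mult_pos_pos q x)
    have "(q*R - 2*D)*(10*q+3*x)*(2*q+x) = -2*D*(2*q+x)*(10*q+3*x) + q*(R*(2*q+x))*(10*q+3*x)"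
      by (simp add: algebra_simps)
    also have "\<dots> = -2*D*(2*q+x)*(10*q+3*x) + q*(2*q+3*x)*(10*q+3*x)" using hR by simp
    finally have "(q*R - 2*D)*(10*q+3*x)*(2*q+x) \<le> (-6*D^2)*(2*q+x)" using poly by simp
    hence b: "(q*R - 2*D)*(10*q+3*x) \<le> -6*D^2" using p1 mult_le_cancel_right_pos by blast
    have "(q*R - 2*D)/(2*D^2) = ((q*R - 2*D)*(10*q+3*x))/(2*D^2*(10*q+3*x))"
      using p1 D by simp
    also have "\<dots> \<le> (-6*D^2)/(2*D^2*(10*q+3*x))"
      by (rule divide_right_mono[OF b]) (use p1 D in simp)
    also have "\<dots> = - (3 / (10 * q + 3 * x))" using aux6[of D "10*q+3*x"] D p1 by simp
    finally show ?thesis using a unfolding R_def by simp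
  qed
  have "- (t / D) * t + q * ((2*q + 3*x) / (2*q + x)) * (t / D)\<^sup>2 / 2
        = t\<^sup>2 * (- (1 / D) + q * ((2*q + 3*x) / (2*q + x)) * (1/D)\<^sup>2 / 2)"
    by (simp add: field_simps power2_eq_square)
  also have "\<dots> \<le> t\<^sup>2 * (- (3 / (10 * q + 3 * x)))" by (rule mult_left_mono[OF main]) simp
  also have "\<dots> = - (t\<^sup>2 / (10 * q / 3 + c * t))" unfolding E by simp
  finally have fin: "- (t / D) * t + q * ((2*q + 3*x) / (2*q + x)) * (t / D)\<^sup>2 / 2 \<le> - (t\<^sup>2 / (10 * q / 3 + c * t))" .
  show ?thesis using fin unfolding R[symmetric] unfolding D_def x_def .
qed



lemma alg_a: fixes D s t :: real assumes "0 < D" "0 < s"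
  shows "- (t / D) * t + s * (t / D)\<^sup>2 / (2 * (s / D)) = - (t\<^sup>2 / (2 * D))"
  using assms by (simp add: field_simps power2_eq_square)

lemma ln_half: fixes L :: real assumes "0 < L" shows "ln L \<le> L / 2"
proof -
  have s: "0 < sqrt L" using assms by simp
  have "ln L = 2 * ln (sqrt L)" using assms by (simp add: ln_sqrt)
  also have "\<dots> \<le> 2 * (sqrt L - 1)" using ln_le_minus_one[OF s] by simp
  also have "\<dots> \<le> L / 2"
  proof -
    have "0 \<le> (sqrt L - 2)^2" by simp
    hence "0 \<le> L - 4 * sqrt L + 4" using assms by (simp add: power2_eq_square algebra_simps)
    thus ?thesis by simp
  qed
  finally show ?thesis .
qed


context prob_space begin

lemma tail_a:
  fixes Z Zs :: "'a \<Rightarrow> real" and \<sigma>2 c t :: real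
  assumes Zi: "integrable M Z" and Zsm: "Zs \<in> borel_measurable M" and sig: "0 < \<sigma>2"
    and zb: "\<And>u. 0 \<le> u \<Longrightarrow> integrable M (\<lambda>\<omega>. Z \<omega> * exp (u * Z \<omega>)) \<Longrightarrow>
              integrable M (\<lambda>\<omega>. exp (u * Zs \<omega>)) \<Longrightarrow>
              (\<integral>\<omega>. Z \<omega> * exp (u * Z \<omega>) \<partial>M) = \<sigma>2 * u * (\<integral>\<omega>. exp (u * Zs \<omega>) \<partial>M)"
    and c: "0 < c" and ae: "AE \<omega> in M. Zs \<omega> - Z \<omega> \<le> c"
    and ints: "\<And>u. 0 \<le> u \<Longrightarrow> u < 1/c \<Longrightarrow> integrable M (\<lambda>\<omega>. exp (u * Z \<omega>))"
    and t: "0 \<le> t"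
  shows "measure M {\<omega>\<in>space M. t \<le> Z \<omega>} \<le> exp (- (t\<^sup>2 / (2 * (\<sigma>2 + c * t))))"
proof (cases "t = 0")
  case True then show ?thesis by simp
next
  case False
  hence tp: "0 < t" using t by simp
  have Zm: "Z \<in> borel_measurable M" using Zi by auto
  define \<theta> where "\<theta> = t / (\<sigma>2 + c * t)"
  have den: "0 < \<sigma>2 + c * t" using sig c t by (simp add: add_pos_nonneg)
  have thp: "0 < \<theta>" using tp den by (simp add: \<theta>_def)
  have thc: "\<theta> * c < 1" using den sig c tp by (simp add: \<theta>_def field_simps)
  define K where "K = 1 - \<theta> * c"
  have Kp: "0 < K" using thc by (simp add: K_def)
  define \<theta>1 where "\<theta>1 = (\<theta> + 1/c) / 2"
  have th1: "\<theta> < \<theta>1" "\<theta>1 < 1/c" using thc c by (simp_all add: \<theta>1_def field_simps)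
  have i1: "integrable M (\<lambda>\<omega>. exp (\<theta>1 * Z \<omega>))" using ints th1 thp by simp
  have mb: "(\<integral>\<omega>. exp (\<theta> * Z \<omega>) \<partial>M) \<le> exp (\<sigma>2 * \<theta>\<^sup>2 / (2 * K))"
  proof (rule core[OF Zi Zsm sig zb i1 thp th1(1), where b = "\<lambda>u. \<sigma>2 * u / K"])
    show "0 \<le> x \<Longrightarrow> x \<le> y \<Longrightarrow> \<sigma>2 * x / K \<le> \<sigma>2 * y / K" for x y
      using sig Kp by (simp add: divide_right_mono)
    show "0 \<le> \<sigma>2 * 0 / K" by simp
    show "((\<lambda>u. \<sigma>2 * u\<^sup>2 / (2 * K)) has_real_derivative \<sigma>2 * x / K) (at x)" for x
      using Kp by (auto intro!: derivative_eq_intros simp: field_simps power2_eq_square)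
    show "\<sigma>2 * 0\<^sup>2 / (2 * K) = 0" by simp
    fix u assume u: "0 \<le> u" "u \<le> \<theta>"
    show "AE \<omega> in M. \<sigma>2 * u * exp (u * Zs \<omega>) \<le> \<sigma>2 * u / K * exp (u * Z \<omega>)"
      using ae
    proof eventually_elim
      case (elim \<omega>)
      have "exp (u * Zs \<omega>) * (1 - u * c) \<le> exp (u * Z \<omega>)" by (rule pw_a[OF u(1) elim])
      moreover have "K \<le> 1 - u * c" using u c by (simp add: K_def mult_right_mono)
      ultimately have "exp (u * Zs \<omega>) * K \<le> exp (u * Z \<omega>)"
        by (smt (verit) exp_gt_zero mult_left_mono)
      hence "exp (u * Zs \<omega>) \<le> exp (u * Z \<omega>) / K" using Kp by (simp add: pos_le_divide_eq)
      hence "\<sigma>2 * u * exp (u * Zs \<omega>) \<le> \<sigma>2 * u * (exp (u * Z \<omega>) / K)"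
        by (rule mult_left_mono) (use sig u in simp)
      thus ?case by simp
    qed
  qed (simp_all)
  have "measure M {\<omega>\<in>space M. t \<le> Z \<omega>} \<le> exp (- \<theta> * t) * (\<integral>\<omega>. exp (\<theta> * Z \<omega>) \<partial>M)"
    using chernoff[of \<theta> Z t] exp_int_mono[OF i1 Zm, of \<theta>] thp th1 Zm by simp
  also have "\<dots> \<le> exp (- \<theta> * t) * exp (\<sigma>2 * \<theta>\<^sup>2 / (2 * K))" using mb by simp
  also have "\<dots> = exp (- (t\<^sup>2 / (2 * (\<sigma>2 + c * t))))"
  proof -
    have hk: "K = \<sigma>2 / (\<sigma>2 + c * t)" using den by (simp add: K_def \<theta>_def field_simps)
    have "- \<theta> * t + \<sigma>2 * \<theta>\<^sup>2 / (2 * K) = - (t\<^sup>2 / (2 * (\<sigma>2 + c * t)))"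
      unfolding hk \<theta>_def using alg_a[OF den sig] .
    thus ?thesis by (simp add: exp_add[symmetric])
  qed
  finally show ?thesis .
qed


lemma tail_c:
  fixes Z Zs :: "'a \<Rightarrow> real" and \<sigma>2 c t :: real
  assumes Zi: "integrable M Z" and Zsm: "Zs \<in> borel_measurable M" and sig: "0 < \<sigma>2"
    and zb: "\<And>u. 0 \<le> u \<Longrightarrow> integrable M (\<lambda>\<omega>. Z \<omega> * exp (u * Z \<omega>)) \<Longrightarrow>
              integrable M (\<lambda>\<omega>. exp (u * Zs \<omega>)) \<Longrightarrow>
              (\<integral>\<omega>. Z \<omega> * exp (u * Z \<omega>) \<partial>M) = \<sigma>2 * u * (\<integral>\<omega>. exp (u * Zs \<omega>) \<partial>M)"
    and c: "0 < c" and ae: "AE \<omega> in M. Zs \<omega> - Z \<omega> \<le> c"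
    and ints: "\<And>u. 0 \<le> u \<Longrightarrow> u < 1/c \<Longrightarrow> integrable M (\<lambda>\<omega>. exp (u * Z \<omega>))"
    and t: "0 \<le> t"
  shows "measure M {\<omega>\<in>space M. t \<le> Z \<omega>} \<le> exp (- (t\<^sup>2 / (10 * \<sigma>2 / 3 + c * t)))"
proof (cases "t = 0")
  case True then show ?thesis by simp
next
  case False
  hence tp: "0 < t" using t by simp
  have Zm: "Z \<in> borel_measurable M" using Zi by auto
  define \<theta> where "\<theta> = t / (\<sigma>2 + c * t)"
  have den: "0 < \<sigma>2 + c * t" using sig c t by (simp add: add_pos_nonneg)
  have thp: "0 < \<theta>" using tp den by (simp add: \<theta>_def)
  have thc: "\<theta> * c < 1" using den sig c tp by (simp add: \<theta>_def field_simps)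
  define R where "R = (2 + \<theta> * c) / (2 - \<theta> * c)"
  have Rp: "0 \<le> R" using thc thp c by (simp add: R_def)
  define \<theta>1 where "\<theta>1 = (\<theta> + 1/c) / 2"
  have th1: "\<theta> < \<theta>1" "\<theta>1 < 1/c" using thc c by (simp_all add: \<theta>1_def field_simps)
  have i1: "integrable M (\<lambda>\<omega>. exp (\<theta>1 * Z \<omega>))" using ints th1 thp by simp
  have mb: "(\<integral>\<omega>. exp (\<theta> * Z \<omega>) \<partial>M) \<le> exp (\<sigma>2 * R * \<theta>\<^sup>2 / 2)"
  proof (rule core[OF Zi Zsm sig zb i1 thp th1(1), where b = "\<lambda>u. \<sigma>2 * R * u"])
    show "0 \<le> x \<Longrightarrow> x \<le> y \<Longrightarrow> \<sigma>2 * R * x \<le> \<sigma>2 * R * y" for x y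
      using sig Rp by (simp add: mult_left_mono)
    show "0 \<le> \<sigma>2 * R * 0" by simp
    show "((\<lambda>u. \<sigma>2 * R * u\<^sup>2 / 2) has_real_derivative \<sigma>2 * R * x) (at x)" for x
      by (auto intro!: derivative_eq_intros simp: field_simps power2_eq_square)
    show "\<sigma>2 * R * 0\<^sup>2 / 2 = 0" by simp
    fix u assume u: "0 \<le> u" "u \<le> \<theta>"
    have uc: "u * c \<le> \<theta> * c" using u c by (simp add: mult_right_mono)
    have uc2: "u * c < 2" using uc thc by simp
    show "AE \<omega> in M. \<sigma>2 * u * exp (u * Zs \<omega>) \<le> \<sigma>2 * R * u * exp (u * Z \<omega>)"
      using ae
    proof eventually_elim
      case (elim \<omega>)
      let ?a = "exp (u * Zs \<omega>)" and ?b = "exp (u * Z \<omega>)"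
      have 1: "?a * (2 - u * c) \<le> ?b * (2 + u * c)" by (rule pw_c[OF u(1) elim uc2 c])
      have 2: "(2 + u * c) * (2 - \<theta> * c) \<le> (2 + \<theta> * c) * (2 - u * c)"
        using uc by (simp add: algebra_simps)
      have "?a * (2 - u * c) * (2 - \<theta> * c) \<le> ?b * (2 + u * c) * (2 - \<theta> * c)"
        using 1 thc by (simp add: mult_right_mono)
      also have "\<dots> \<le> ?b * ((2 + \<theta> * c) * (2 - u * c))"
        using 2 by (simp add: mult_left_mono mult.assoc)
      finally have "(?a * (2 - \<theta> * c)) * (2 - u * c) \<le> (?b * (2 + \<theta> * c)) * (2 - u * c)"
        by (simp add: algebra_simps)
      hence "?a * (2 - \<theta> * c) \<le> ?b * (2 + \<theta> * c)" using uc2 by simp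
      hence "?a \<le> R * ?b" using thc by (simp add: R_def field_simps)
      hence "\<sigma>2 * u * ?a \<le> \<sigma>2 * u * (R * ?b)"
        by (rule mult_left_mono) (use sig u in simp)
      thus ?case by (simp add: algebra_simps)
    qed
  qed (simp_all)
  have "measure M {\<omega>\<in>space M. t \<le> Z \<omega>} \<le> exp (- \<theta> * t) * (\<integral>\<omega>. exp (\<theta> * Z \<omega>) \<partial>M)"
    using chernoff[of \<theta> Z t] exp_int_mono[OF i1 Zm, of \<theta>] thp th1 Zm by simp
  also have "\<dots> \<le> exp (- \<theta> * t) * exp (\<sigma>2 * R * \<theta>\<^sup>2 / 2)" using mb by simp
  also have "\<dots> = exp (- \<theta> * t + \<sigma>2 * R * \<theta>\<^sup>2 / 2)" by (simp only: exp_add)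
  also have "\<dots> \<le> exp (- (t\<^sup>2 / (10 * \<sigma>2 / 3 + c * t)))"
    using alg_c[OF sig c t] unfolding R_def \<theta>_def by simp
  finally show ?thesis .
qed


lemma tail_b:
  fixes Z Zs :: "'a \<Rightarrow> real" and \<sigma>2 c t :: real
  assumes Zi: "integrable M Z" and Zsm: "Zs \<in> borel_measurable M" and sig: "0 < \<sigma>2"
    and zb: "\<And>u. 0 \<le> u \<Longrightarrow> integrable M (\<lambda>\<omega>. Z \<omega> * exp (u * Z \<omega>)) \<Longrightarrow>
              integrable M (\<lambda>\<omega>. exp (u * Zs \<omega>)) \<Longrightarrow>
              (\<integral>\<omega>. Z \<omega> * exp (u * Z \<omega>) \<partial>M) = \<sigma>2 * u * (\<integral>\<omega>. exp (u * Zs \<omega>) \<partial>M)"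
    and c: "0 < c" and ae: "AE \<omega> in M. Zs \<omega> - Z \<omega> \<le> c"
    and t: "exp 1 < t"
    and i1: "integrable M (\<lambda>\<omega>. exp (((ln t - ln (ln t)) / c) * Z \<omega>))"
  shows "measure M {\<omega>\<in>space M. t \<le> Z \<omega>} \<le> exp (- (t / c) * (ln t - ln (ln t) - \<sigma>2 / c))"
proof -
  have Zm: "Z \<in> borel_measurable M" using Zi by auto
  have tp: "0 < t" using t exp_gt_zero less_trans by blast
  define L where "L = ln t"
  have L1: "1 < L" unfolding L_def using t tp ln_less_cancel_iff[of "exp 1" t] by simp
  have lL0: "0 < ln L" using L1 by simp
  have lLL: "ln L < L" using L1 by (simp add: ln_less_self)
  have Lt: "L \<le> t" unfolding L_def using tp ln_le_minus_one[of t] by simp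
  define \<theta> where "\<theta> = (L - ln L) / c"
  have thp: "0 < \<theta>" using lLL c by (simp add: \<theta>_def)
  define b where "b u = \<sigma>2 * u * exp (u * c)" for u
  define G where "G u = \<sigma>2 * (exp (u * c) * (u * c - 1) + 1) / c^2" for u
  define F where "F u = exp (- u * t + G u)" for u
  have i1': "integrable M (\<lambda>\<omega>. exp (\<theta> * Z \<omega>))" using i1 by (simp add: \<theta>_def L_def)
  have P: "measure M {\<omega>\<in>space M. t \<le> Z \<omega>} \<le> F v" if v: "0 < v" "v < \<theta>" for v
  proof -
    have mb: "(\<integral>\<omega>. exp (v * Z \<omega>) \<partial>M) \<le> exp (G v)"
    proof (rule core[OF Zi Zsm sig zb i1' v, where b = b])
      show "0 \<le> x \<Longrightarrow> x \<le> y \<Longrightarrow> b x \<le> b y" for x y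
        unfolding b_def using sig c
        by (intro mult_mono mult_left_mono) (auto simp: mult_right_mono)
      show "0 \<le> b 0" by (simp add: b_def)
      show "(G has_real_derivative b x) (at x)" for x
        unfolding G_def b_def using c
        by (auto intro!: derivative_eq_intros simp: field_simps power2_eq_square)
      show "G 0 = 0" by (simp add: G_def)
      fix u assume u: "0 \<le> u" "u \<le> v"
      show "AE \<omega> in M. \<sigma>2 * u * exp (u * Zs \<omega>) \<le> b u * exp (u * Z \<omega>)"
        using ae
      proof eventually_elim
        case (elim \<omega>)
        have "u * Zs \<omega> \<le> u * c + u * Z \<omega>"
          using mult_left_mono[OF elim u(1)] by (simp add: algebra_simps)
        hence "exp (u * Zs \<omega>) \<le> exp (u * c) * exp (u * Z \<omega>)" by (simp add: exp_add[symmetric])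
        hence "\<sigma>2 * u * exp (u * Zs \<omega>) \<le> \<sigma>2 * u * (exp (u * c) * exp (u * Z \<omega>))"
          by (rule mult_left_mono) (use sig u in simp)
        thus ?case by (simp add: b_def algebra_simps)
      qed
    qed simp_all
    have "measure M {\<omega>\<in>space M. t \<le> Z \<omega>} \<le> exp (- v * t) * (\<integral>\<omega>. exp (v * Z \<omega>) \<partial>M)"
      using chernoff[of v Z t] exp_int_mono[OF i1' Zm, of v] v Zm by simp
    also have "\<dots> \<le> exp (- v * t) * exp (G v)" using mb by simp
    also have "\<dots> = F v" by (simp only: F_def exp_add)
    finally show ?thesis .
  qed
  have Fc: "isCont F \<theta>" unfolding F_def G_def using c by (intro continuous_intros) auto
  have lim: "(F \<longlongrightarrow> F \<theta>) (at_left \<theta>)"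
    using tendsto_mono[OF at_le[OF subset_UNIV] isContD[OF Fc]] .
  have ev: "eventually (\<lambda>v. measure M {\<omega>\<in>space M. t \<le> Z \<omega>} \<le> F v) (at_left \<theta>)"
    using eventually_at_left_real[OF thp] by eventually_elim (use P in auto)
  have PF: "measure M {\<omega>\<in>space M. t \<le> Z \<omega>} \<le> F \<theta>"
    by (rule tendsto_le[OF trivial_limit_at_left_real lim tendsto_const ev])
  have e: "exp (\<theta> * c) = t / L"
  proof -
    have "\<theta> * c = L - ln L" using c by (simp add: \<theta>_def)
    hence "exp (\<theta> * c) = exp L / exp (ln L)" by (simp add: exp_diff)
    also have "\<dots> = t / L"
    proof -
      have "1 < exp (1::real)" by simp
      hence "1 < t" using t by linarith
      thus ?thesis using L1 tp by (simp add: L_def)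
    qed
    finally show ?thesis .
  qed
  have "G \<theta> \<le> \<sigma>2 * t / c^2"
  proof -
    have "exp (\<theta> * c) * (\<theta> * c - 1) + 1 = t / L * (L - ln L - 1) + 1"
      using e c by (simp add: \<theta>_def)
    also have "\<dots> = t - t * (ln L + 1) / L + 1" using L1 by (simp add: field_simps)
    also have "\<dots> \<le> t"
    proof -
      have "t * 1 \<le> t * (ln L + 1)" using lL0 tp by (intro mult_left_mono) auto
      hence "L \<le> t * (ln L + 1)" using Lt by simp
      hence "1 \<le> t * (ln L + 1) / L" using L1 by (simp add: le_divide_eq)
      thus ?thesis by simp
    qed
    finally have "exp (\<theta> * c) * (\<theta> * c - 1) + 1 \<le> t" .
    hence "\<sigma>2 * (exp (\<theta> * c) * (\<theta> * c - 1) + 1) \<le> \<sigma>2 * t" using sig by simp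
    thus ?thesis unfolding G_def using c by (simp add: divide_right_mono)
  qed
  hence "- \<theta> * t + G \<theta> \<le> - (t / c) * (ln t - ln (ln t) - \<sigma>2 / c)"
    using c by (simp add: \<theta>_def L_def field_simps power2_eq_square)
  hence "F \<theta> \<le> exp (- (t / c) * (ln t - ln (ln t) - \<sigma>2 / c))" by (simp add: F_def)
  with PF show ?thesis by linarith
qed

end


lemma zb_gen:
  fixes Y Ys :: "'a \<Rightarrow> real" and s u :: real
  assumes zb: "zero_biased M Y Ys" and s: "s * s = 1"
    and i1: "integrable M (\<lambda>\<omega>. s * Y \<omega> * exp (u * (s * Y \<omega>)))"
    and i2: "integrable M (\<lambda>\<omega>. exp (u * (s * Ys \<omega>)))"
  shows "(\<integral>\<omega>. s * Y \<omega> * exp (u * (s * Y \<omega>)) \<partial>M) = (\<integral>\<omega>. (Y \<omega>)\<^sup>2 \<partial>M) * u * (\<integral>\<omega>. exp (u * (s * Ys \<omega>)) \<partial>M)"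
proof -
  define r where "r = s * u"
  have e1: "s * Y \<omega> * exp (u * (s * Y \<omega>)) = s * (Y \<omega> * exp (r * Y \<omega>))" for \<omega>
    by (simp add: r_def algebra_simps)
  have e2: "Y \<omega> * exp (r * Y \<omega>) = s * (s * Y \<omega> * exp (u * (s * Y \<omega>)))" for \<omega>
  proof -
    have "s * (s * Y \<omega> * exp (u * (s * Y \<omega>))) = (s * s) * (Y \<omega> * exp (r * Y \<omega>))"
      by (simp add: r_def algebra_simps)
    thus ?thesis using s by (metis mult_1)
  qed
  have e3: "exp (r * Ys \<omega>) = exp (u * (s * Ys \<omega>))" for \<omega> by (simp add: r_def algebra_simps)
  have j1: "integrable M (\<lambda>\<omega>. Y \<omega> * exp (r * Y \<omega>))"
    unfolding e2 using i1 by simp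
  have j2: "integrable M (\<lambda>\<omega>. r * exp (r * Ys \<omega>))"
    unfolding e3 using i2 by simp
  have "(\<integral>\<omega>. Y \<omega> * exp (r * Y \<omega>) \<partial>M) = (\<integral>\<omega>. (Y \<omega>)\<^sup>2 \<partial>M) * (\<integral>\<omega>. r * exp (r * Ys \<omega>) \<partial>M)"
    using zb abs_cont_exp[of r] j1 j2 unfolding zero_biased_def by blast
  hence k: "(\<integral>\<omega>. Y \<omega> * exp (r * Y \<omega>) \<partial>M) = (\<integral>\<omega>. (Y \<omega>)\<^sup>2 \<partial>M) * (r * (\<integral>\<omega>. exp (u * (s * Ys \<omega>)) \<partial>M))"
    unfolding e3 by simp
  have "(\<integral>\<omega>. s * Y \<omega> * exp (u * (s * Y \<omega>)) \<partial>M) = s * (\<integral>\<omega>. Y \<omega> * exp (r * Y \<omega>) \<partial>M)"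
    unfolding e1 by simp
  also have "\<dots> = (s * s) * u * (\<integral>\<omega>. (Y \<omega>)\<^sup>2 \<partial>M) * (\<integral>\<omega>. exp (u * (s * Ys \<omega>)) \<partial>M)"
    unfolding k by (simp add: r_def algebra_simps)
  finally show ?thesis using s by simp
qed

lemma b2: fixes c t s :: real assumes c: "0 < c" and t: "exp 1 < t"
  shows "exp (- (t / c) * (ln t - ln (ln t) - s / c)) \<le> exp (- (t / (2 * c)) * (ln t - 2 * s / c))"
proof -
  have tp: "0 < t" using t exp_gt_zero less_trans by blast
  have L1: "1 < ln t" using t tp ln_less_cancel_iff[of "exp 1" t] by simp
  have h: "ln (ln t) \<le> ln t / 2" using ln_half L1 by simp
  have "- (t / c) * (ln t - ln (ln t) - s / c) - (- (t / (2 * c)) * (ln t - 2 * s / c))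
        = - (t / c) * (ln t / 2 - ln (ln t))" using c by (simp add: field_simps)
  also have "\<dots> \<le> 0" using h tp c by (simp add: mult_nonneg_nonneg)
  finally show ?thesis by simp
qed

theorem theorem2p1:
  fixes M :: "'a measure" and Y Ys :: "'a \<Rightarrow> real" and sigma2 :: real
  assumes "prob_space M"
    and "Y \<in> borel_measurable M" and "Ys \<in> borel_measurable M"
    and "integrable M Y" and "(\<integral>\<omega>. Y \<omega> \<partial>M) = 0"
    and "integrable M (\<lambda>\<omega>. (Y \<omega>)\<^sup>2)"
    and "sigma2 = (\<integral>\<omega>. (Y \<omega>)\<^sup>2 \<partial>M)" and "0 < sigma2"
    and "zero_biased M Y Ys"
  shows
   "(\<forall>c>0. (AE \<omega> in M. Ys \<omega> - Y \<omega> \<le> c) \<and>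
        (\<forall>s\<in>{0..<1/c}. integrable M (\<lambda>\<omega>. exp (s * Y \<omega>))) \<longrightarrow>
        (\<forall>t\<ge>0. measure M {\<omega>\<in>space M. Y \<omega> \<ge> t} \<le> exp (- (t\<^sup>2 / (2 * (sigma2 + c * t)))))) \<and>
    (\<forall>c>0. (AE \<omega> in M. Y \<omega> - Ys \<omega> \<le> c) \<and>
        (\<forall>s\<in>{-1/c<..0}. integrable M (\<lambda>\<omega>. exp (s * Y \<omega>))) \<longrightarrow>
        (\<forall>t\<ge>0. measure M {\<omega>\<in>space M. Y \<omega> \<le> -t} \<le> exp (- (t\<^sup>2 / (2 * (sigma2 + c * t)))))) \<and>
    (\<forall>c>0. (AE \<omega> in M. \<bar>Ys \<omega> - Y \<omega>\<bar> \<le> c) \<and>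
        (\<forall>s\<in>{0..<2/c}. integrable M (\<lambda>\<omega>. exp (s * Y \<omega>))) \<longrightarrow>
        (\<forall>t\<ge>0. measure M {\<omega>\<in>space M. Y \<omega> \<ge> t} \<le> exp (- (t\<^sup>2 / (10 * sigma2 / 3 + c * t))))) \<and>
    (\<forall>c>0. (AE \<omega> in M. \<bar>Ys \<omega> - Y \<omega>\<bar> \<le> c) \<and>
        (\<forall>s\<in>{-2/c<..0}. integrable M (\<lambda>\<omega>. exp (s * Y \<omega>))) \<longrightarrow>
        (\<forall>t\<ge>0. measure M {\<omega>\<in>space M. Y \<omega> \<le> -t} \<le> exp (- (t\<^sup>2 / (10 * sigma2 / 3 + c * t))))) \<and>
    (\<forall>c>0. \<forall>t>exp 1.
        (AE \<omega> in M. Ys \<omega> - Y \<omega> \<le> c) \<and>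
        integrable M (\<lambda>\<omega>. exp (((ln t - ln (ln t)) / c) * Y \<omega>)) \<longrightarrow>
        measure M {\<omega>\<in>space M. Y \<omega> \<ge> t}
          \<le> exp (- (t / c) * (ln t - ln (ln t) - sigma2 / c)) \<and>
        exp (- (t / c) * (ln t - ln (ln t) - sigma2 / c))
          \<le> exp (- (t / (2 * c)) * (ln t - 2 * sigma2 / c))) \<and>
    (\<forall>c>0. \<forall>t>exp 1.
        (AE \<omega> in M. Y \<omega> - Ys \<omega> \<le> c) \<and>
        integrable M (\<lambda>\<omega>. exp (- ((ln t - ln (ln t)) / c) * Y \<omega>)) \<longrightarrow>
        measure M {\<omega>\<in>space M. Y \<omega> \<le> -t}
          \<le> exp (- (t / c) * (ln t - ln (ln t) - sigma2 / c)) \<and>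
        exp (- (t / c) * (ln t - ln (ln t) - sigma2 / c))
          \<le> exp (- (t / (2 * c)) * (ln t - 2 * sigma2 / c)))"
proof -
  interpret P: prob_space M by fact
  note Yi = assms(4)
  have Ym: "Y \<in> borel_measurable M" by fact
  have Ysm: "Ys \<in> borel_measurable M" by fact
  have sig: "0 < sigma2" by fact
  have zb: "zero_biased M Y Ys" by fact
  have s2: "sigma2 = (\<integral>\<omega>. (Y \<omega>)\<^sup>2 \<partial>M)" by fact
  have Ni: "integrable M (\<lambda>\<omega>. - Y \<omega>)" using Yi by simp
  have Nsm: "(\<lambda>\<omega>. - Ys \<omega>) \<in> borel_measurable M" using Ysm by simp
  have zbP: "(\<integral>\<omega>. Y \<omega> * exp (u * Y \<omega>) \<partial>M) = sigma2 * u * (\<integral>\<omega>. exp (u * Ys \<omega>) \<partial>M)"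
    if "0 \<le> u" "integrable M (\<lambda>\<omega>. Y \<omega> * exp (u * Y \<omega>))" "integrable M (\<lambda>\<omega>. exp (u * Ys \<omega>))" for u
    using zb_gen[OF zb, of 1 u] that s2 by simp
  have zbN: "(\<integral>\<omega>. - Y \<omega> * exp (u * - Y \<omega>) \<partial>M) = sigma2 * u * (\<integral>\<omega>. exp (u * - Ys \<omega>) \<partial>M)"
    if "0 \<le> u" "integrable M (\<lambda>\<omega>. - Y \<omega> * exp (u * - Y \<omega>))" "integrable M (\<lambda>\<omega>. exp (u * - Ys \<omega>))" for u
    using zb_gen[OF zb, of "-1" u] that s2 by simp
  have setN: "{\<omega>\<in>space M. Y \<omega> \<le> -t} = {\<omega>\<in>space M. t \<le> - Y \<omega>}" for t :: real by auto
  have expN: "exp (u * - Y \<omega>) = exp ((-u) * Y \<omega>)" for u \<omega> by simp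
  show ?thesis
  proof (intro conjI allI impI)
    fix c t :: real
    assume c: "0 < c" and h: "(AE \<omega> in M. Ys \<omega> - Y \<omega> \<le> c) \<and> (\<forall>s\<in>{0..<1/c}. integrable M (\<lambda>\<omega>. exp (s * Y \<omega>)))"
      and t: "0 \<le> t"
    show "measure M {\<omega>\<in>space M. Y \<omega> \<ge> t} \<le> exp (- (t\<^sup>2 / (2 * (sigma2 + c * t))))"
      using P.tail_a[OF Yi Ysm sig zbP c _ _ t] h by auto
  next
    fix c t :: real
    assume c: "0 < c" and h: "(AE \<omega> in M. Y \<omega> - Ys \<omega> \<le> c) \<and> (\<forall>s\<in>{-1/c<..0}. integrable M (\<lambda>\<omega>. exp (s * Y \<omega>)))"
      and t: "0 \<le> t"
    have ae: "AE \<omega> in M. - Ys \<omega> - - Y \<omega> \<le> c" using h by auto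
    have ints: "integrable M (\<lambda>\<omega>. exp (u * - Y \<omega>))" if "0 \<le> u" "u < 1/c" for u
    proof -
      have "(-u) \<in> {-1/c<..0}" using that by auto
      hence "integrable M (\<lambda>\<omega>. exp ((-u) * Y \<omega>))" using h by blast
      thus ?thesis by simp
    qed
    show "measure M {\<omega>\<in>space M. Y \<omega> \<le> -t} \<le> exp (- (t\<^sup>2 / (2 * (sigma2 + c * t))))"
      unfolding setN using P.tail_a[OF Ni Nsm sig zbN c ae ints t] by simp
  next
    fix c t :: real
    assume c: "0 < c" and h: "(AE \<omega> in M. \<bar>Ys \<omega> - Y \<omega>\<bar> \<le> c) \<and> (\<forall>s\<in>{0..<2/c}. integrable M (\<lambda>\<omega>. exp (s * Y \<omega>)))"
      and t: "0 \<le> t"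
    have ae: "AE \<omega> in M. Ys \<omega> - Y \<omega> \<le> c" using h by auto
    have ints: "integrable M (\<lambda>\<omega>. exp (u * Y \<omega>))" if "0 \<le> u" "u < 1/c" for u
    proof -
      have "1/c < 2/c" using c by (simp add: divide_strict_right_mono)
      thus ?thesis using h that by auto
    qed
    show "measure M {\<omega>\<in>space M. Y \<omega> \<ge> t} \<le> exp (- (t\<^sup>2 / (10 * sigma2 / 3 + c * t)))"
      using P.tail_c[OF Yi Ysm sig zbP c ae ints t] by simp
  next
    fix c t :: real
    assume c: "0 < c" and h: "(AE \<omega> in M. \<bar>Ys \<omega> - Y \<omega>\<bar> \<le> c) \<and> (\<forall>s\<in>{-2/c<..0}. integrable M (\<lambda>\<omega>. exp (s * Y \<omega>)))"
      and t: "0 \<le> t"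
    have ae: "AE \<omega> in M. - Ys \<omega> - - Y \<omega> \<le> c" using h by auto
    have ints: "integrable M (\<lambda>\<omega>. exp (u * - Y \<omega>))" if "0 \<le> u" "u < 1/c" for u
    proof -
      have "1/c < 2/c" using c by (simp add: divide_strict_right_mono)
      hence "(-u) \<in> {-2/c<..0}" using that by auto
      hence "integrable M (\<lambda>\<omega>. exp ((-u) * Y \<omega>))" using h by blast
      thus ?thesis by simp
    qed
    show "measure M {\<omega>\<in>space M. Y \<omega> \<le> -t} \<le> exp (- (t\<^sup>2 / (10 * sigma2 / 3 + c * t)))"
      unfolding setN using P.tail_c[OF Ni Nsm sig zbN c ae ints t] by simp
  next
    fix c t :: real
    assume c: "0 < c" and t: "exp 1 < t"
      and h: "(AE \<omega> in M. Ys \<omega> - Y \<omega> \<le> c) \<and> integrable M (\<lambda>\<omega>. exp (((ln t - ln (ln t)) / c) * Y \<omega>))"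
    show "measure M {\<omega>\<in>space M. Y \<omega> \<ge> t} \<le> exp (- (t / c) * (ln t - ln (ln t) - sigma2 / c))"
      using P.tail_b[OF Yi Ysm sig zbP c _ t] h by auto
    show "exp (- (t / c) * (ln t - ln (ln t) - sigma2 / c)) \<le> exp (- (t / (2 * c)) * (ln t - 2 * sigma2 / c))"
      by (rule b2[OF c t])
  next
    fix c t :: real
    assume c: "0 < c" and t: "exp 1 < t"
      and h: "(AE \<omega> in M. Y \<omega> - Ys \<omega> \<le> c) \<and> integrable M (\<lambda>\<omega>. exp (- ((ln t - ln (ln t)) / c) * Y \<omega>))"
    have ae: "AE \<omega> in M. - Ys \<omega> - - Y \<omega> \<le> c" using h by auto
    have i: "integrable M (\<lambda>\<omega>. exp (((ln t - ln (ln t)) / c) * - Y \<omega>))"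
      using h by (simp add: expN)
    show "measure M {\<omega>\<in>space M. Y \<omega> \<le> -t} \<le> exp (- (t / c) * (ln t - ln (ln t) - sigma2 / c))"
      unfolding setN using P.tail_b[OF Ni Nsm sig zbN c ae t i] by simp
    show "exp (- (t / c) * (ln t - ln (ln t) - sigma2 / c)) \<le> exp (- (t / (2 * c)) * (ln t - 2 * sigma2 / c))"
      by (rule b2[OF c t])
  qed
qed


end
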